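(* Let $a,b,x\ge 0$ be integers and let $(p_m)_{m\ge 2}$ be numbers in $[0,1]$. Suppose the transition probabilities of the constrained walk satisfy $p(r,s)=p_{r+s}$ for all integers $r,s>0$. Then $B(a,b,x)$ equals the probability that an unconstrained walker starting at $(a,b+x+1)$ and taking $a+b+x$ steps ends at one of the $x+1$ points $(-t,1+t)$, $0\le t\le x$, where the unconstrained walker, from any lattice point $(r,s)$ with $r+s\ge 2$, independently moves West (to $(r-1,s)$) with probability $p_{r+s}$ and South (to $(r,s-1)$) with probability $1-p_{r+s}$.
   Context: Constrained walks: let $p(r,s)\in[0,1]$ be given for all integers $r,s>0$. A walker at a lattice point $(r,s)$ with $r,s>0$ moves West to $(r-1,s)$ with probability $p(r,s)$ and South to $(r,s-1)$ with probability $1-p(r,s)$, independently of the past; a walker at a point $(r,0)$ with $r>0$ always moves West, and a walker at $(0,s)$ with $s>0$ always moves South, until the origin is reached. Two walkers $U$ and $L$ start at $(a,b+x+1)$ and $(a+x+1,b)$ respectively and move simultaneously and independently, one step per time unit (both start on the line $X+Y=a+b+x+1$, so at each time they lie on a common antidiagonal). $B(a,b,x)$ is the probability that the first time the two walkers occupy the same lattice point is when they both reach the origin. *)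

theory Defs
  imports "HOL-Probability.Probability"
begin

definition cstep :: "(nat \<Rightarrow> nat \<Rightarrow> real) \<Rightarrow> nat \<times> nat \<Rightarrow> (nat \<times> nat) pmf" where
  "cstep p z = (case z of (r, s) \<Rightarrow>
     if 0 < r \<and> 0 < s then
       map_pmf (\<lambda>w. if w then (r - 1, s) else (r, s - 1)) (bernoulli_pmf (p r s))
     else if 0 < r then return_pmf (r - 1, s)
     else if 0 < s then return_pmf (r, s - 1)
     else return_pmf (0, 0))"

fun ctraj :: "(nat \<Rightarrow> nat \<Rightarrow> real) \<Rightarrow> nat \<Rightarrow> nat \<times> nat \<Rightarrow> (nat \<times> nat) list pmf" where
  "ctraj p 0 z = return_pmf [z]"
| "ctraj p (Suc k) z = bind_pmf (cstep p z) (\<lambda>z'. map_pmf (\<lambda>t. z # t) (ctraj p k z'))"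

text \<open>B(a,b,x): U starts at (a,b+x+1), L at (a+x+1,b), independent; both reach the
  origin after n = a+b+x+1 steps. Event: the first time they occupy the same point,
  that point is the origin.\<close>
definition B :: "(nat \<Rightarrow> nat \<Rightarrow> real) \<Rightarrow> nat \<Rightarrow> nat \<Rightarrow> nat \<Rightarrow> real" where
  "B p a b x = (let n = a + b + x + 1 in
     measure_pmf.prob (pair_pmf (ctraj p n (a, b + x + 1)) (ctraj p n (a + x + 1, b)))
       {(us, ls). \<exists>i\<le>n. us ! i = ls ! i \<and> (\<forall>j<i. us ! j \<noteq> ls ! j) \<and> us ! i = (0, 0)})"

text \<open>One step of the unconstrained walker on the integer lattice: from (r,s)
  West with probability pm (r+s), South otherwise (only used at levels r+s \<ge> 2).\<close>
definition ustep :: "(nat \<Rightarrow> real) \<Rightarrow> int \<times> int \<Rightarrow> (int \<times> int) pmf" where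
  "ustep pm z = (case z of (r, s) \<Rightarrow>
     map_pmf (\<lambda>w. if w then (r - 1, s) else (r, s - 1)) (bernoulli_pmf (pm (nat (r + s)))))"

fun uend :: "(nat \<Rightarrow> real) \<Rightarrow> nat \<Rightarrow> int \<times> int \<Rightarrow> (int \<times> int) pmf" where
  "uend pm 0 z = return_pmf z"
| "uend pm (Suc k) z = bind_pmf (ustep pm z) (uend pm k)"

end

theory Submission
  imports Defs
begin

lemma measure_bind_pmf_int:
  "measure_pmf.prob (bind_pmf M N) X = (\<integral>x. measure_pmf.prob (N x) X \<partial>M)"
proof -
  have "emeasure (measure_pmf (bind_pmf M N)) X = (\<integral>\<^sup>+x. ennreal (measure_pmf.prob (N x) X) \<partial>M)"
    by (subst emeasure_bind_pmf) (simp add: measure_pmf.emeasure_eq_measure)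
  also have "\<dots> = ennreal (\<integral>x. measure_pmf.prob (N x) X \<partial>M)"
    by (rule nn_integral_eq_integral)
       (auto intro!: measure_pmf.integrable_const_bound[where B=1])
  finally show ?thesis
    by (simp add: measure_pmf.emeasure_eq_measure)
qed

lemma pair_bind_bind:
  "pair_pmf (bind_pmf A f) (bind_pmf Q g) = bind_pmf A (\<lambda>a. bind_pmf Q (\<lambda>b. pair_pmf (f a) (g b)))"
  unfolding pair_pmf_def bind_assoc_pmf
  by (subst bind_commute_pmf) (simp add: bind_assoc_pmf)

definition qq :: "(nat \<Rightarrow> real) \<Rightarrow> nat \<Rightarrow> real" where
  "qq pm m = (if 2 \<le> m then pm m else 0)"

fun GG :: "(nat \<Rightarrow> real) \<Rightarrow> nat \<Rightarrow> int \<Rightarrow> real" where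
  "GG pm 0 k = (if 0 < k then 1 else 0)"
| "GG pm (Suc m) k = qq pm (Suc m) * GG pm m (k - 1) + (1 - qq pm (Suc m)) * GG pm m k"

lemma GG_nonpos: "k \<le> 0 \<Longrightarrow> GG pm m k = 0"
  by (induction m arbitrary: k) auto

lemma GG_one: "0 < k \<Longrightarrow> int m \<le> k \<Longrightarrow> GG pm m k = 1"
proof (induction m arbitrary: k)
  case 0
  then show ?case by simp
next
  case (Suc m)
  show ?case
  proof (cases m)
    case 0
    then show ?thesis using Suc by (simp add: qq_def)
  next
    case (Suc m')
    then show ?thesis using Suc.IH[of k] Suc.IH[of "k - 1"] Suc.prems by simp
  qed
qed

lemma uend_fst:
  assumes pm: "\<forall>m\<ge>2. 0 \<le> pm m \<and> pm m \<le> 1"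
  shows "r + s = int k + 1 \<Longrightarrow>
    measure_pmf.prob (uend pm k (r, s)) {z. c < fst z} = GG pm (Suc k) (r - c)"
proof (induction k arbitrary: r s)
  case 0
  then show ?case by (simp add: qq_def)
next
  case (Suc k)
  have q: "nat (r + s) = Suc (Suc k)" using Suc.prems by simp
  have q0: "0 \<le> pm (Suc (Suc k))" "pm (Suc (Suc k)) \<le> 1" using pm by auto
  have "measure_pmf.prob (uend pm (Suc k) (r, s)) {z. c < fst z}
     = pm (Suc (Suc k)) * GG pm (Suc k) (r - 1 - c) + (1 - pm (Suc (Suc k))) * GG pm (Suc k) (r - c)"
  proof -
    have e: "uend pm (Suc k) (r, s) = bind_pmf (bernoulli_pmf (pm (Suc (Suc k))))
        (\<lambda>w. uend pm k (if w then (r - 1, s) else (r, s - 1)))"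
      by (simp add: ustep_def q bind_map_pmf o_def)
    show ?thesis
      unfolding e measure_bind_pmf_int integral_bernoulli_pmf[OF q0]
      using Suc.IH[of "r - 1" s] Suc.IH[of r "s - 1"] Suc.prems
      by (simp del: GG.simps add: algebra_simps)
  qed
  then show ?case by (simp add: qq_def algebra_simps)
qed

lemma uend_supp: "z \<in> set_pmf (uend pm k (r, s)) \<Longrightarrow> fst z + snd z = r + s - int k"
proof (induction k arbitrary: r s)
  case 0
  then show ?case by simp
next
  case (Suc k)
  then show ?case
    by (auto simp: ustep_def split: if_splits)
qed

lemma rhs_val:
  assumes pm: "\<forall>m\<ge>2. 0 \<le> pm m \<and> pm m \<le> 1"
  shows "measure_pmf.prob (uend pm (a + b + x) (int a, int (b + x + 1)))
      {(- int t, 1 + int t) | t. t \<le> x}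
    = GG pm (Suc (a + b + x)) (int (a + x + 1)) - GG pm (Suc (a + b + x)) (int a)"
proof -
  let ?M = "uend pm (a + b + x) (int a, int (b + x + 1))"
  let ?S = "{(- int t, 1 + int t) | t. t \<le> x}"
  let ?A = "{z::int\<times>int. - int (x + 1) < fst z}"
  let ?C = "{z::int\<times>int. 0 < fst z}"
  have eqS: "?S \<inter> set_pmf ?M = (?A - ?C) \<inter> set_pmf ?M"
  proof (intro equalityI subsetI)
    fix z assume "z \<in> ?S \<inter> set_pmf ?M"
    then obtain t where "z = (- int t, 1 + int t)" "t \<le> x" "z \<in> set_pmf ?M" by blast
    then show "z \<in> (?A - ?C) \<inter> set_pmf ?M" by simp
  next
    fix z assume z: "z \<in> (?A - ?C) \<inter> set_pmf ?M"
    have "z \<in> set_pmf ?M" using z by blast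
    from uend_supp[OF this] have h1: "fst z + snd z = 1" by simp
    have h2: "- int (x + 1) < fst z" "fst z \<le> 0" using z by auto
    have "z = (- int (nat (- fst z)), 1 + int (nat (- fst z))) \<and> nat (- fst z) \<le> x"
    proof -
      obtain z1 z2 where zz: "z = (z1, z2)" by fastforce
      show ?thesis using h1 h2 unfolding zz by simp
    qed
    then show "z \<in> ?S \<inter> set_pmf ?M" using z by blast
  qed
  have "measure_pmf.prob ?M ?S = measure_pmf.prob ?M (?S \<inter> set_pmf ?M)"
    by (rule measure_Int_set_pmf[symmetric])
  also have "\<dots> = measure_pmf.prob ?M ((?A - ?C) \<inter> set_pmf ?M)"
    by (simp only: eqS)
  also have "\<dots> = measure_pmf.prob ?M (?A - ?C)"
    by (rule measure_Int_set_pmf)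
  also have "\<dots> = measure_pmf.prob ?M ?A - measure_pmf.prob ?M ?C"
    by (rule measure_pmf.finite_measure_Diff) auto
  also have "\<dots> = GG pm (Suc (a + b + x)) (int (a + x + 1)) - GG pm (Suc (a + b + x)) (int a)"
    using uend_fst[OF pm, of "int a" "int (b + x + 1)" "a + b + x" "- int (x + 1)"]
      uend_fst[OF pm, of "int a" "int (b + x + 1)" "a + b + x" 0]
    by (simp del: GG.simps add: algebra_simps)
  finally show ?thesis .
qed

definition Pk :: "(nat \<Rightarrow> nat \<Rightarrow> real) \<Rightarrow> nat \<Rightarrow> nat \<times> nat \<Rightarrow> nat \<times> nat \<Rightarrow> real" where
  "Pk p k zU zL = measure_pmf.prob (pair_pmf (ctraj p k zU) (ctraj p k zL))
     {(us, ls). \<forall>j<k. us ! j \<noteq> ls ! j}"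

lemma Pk_0: "Pk p 0 zU zL = 1"
  by (simp add: Pk_def)

lemma Pk_0': "Pk p 0 zU = (\<lambda>_. 1)"
  by (rule ext) (simp add: Pk_0)

lemma Pk_Suc: "Pk p (Suc k) zU zL =
  (if zU = zL then 0 else \<integral>u'. (\<integral>l'. Pk p k u' l' \<partial>cstep p zL) \<partial>cstep p zU)"
proof -
  have pre: "(\<lambda>(us, ls). (zU # us, zL # ls)) -` {(us, ls). \<forall>j<Suc k. us ! j \<noteq> ls ! j}
      = (if zU = zL then {} else {(us, ls). \<forall>j<k. us ! j \<noteq> ls ! j})"
  proof (cases "zU = zL")
    case True
    then show ?thesis by fastforce
  next
    case False
    have "(\<forall>j<Suc k. (zU # us) ! j \<noteq> (zL # ls) ! j) \<longleftrightarrow> (\<forall>j<k. us ! j \<noteq> ls ! j)" for us ls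
      using False by (simp add: All_less_Suc2 nth_Cons')
    then show ?thesis using False by auto
  qed
  have inner: "measure_pmf.prob (pair_pmf (map_pmf ((#) zU) (ctraj p k u')) (map_pmf ((#) zL) (ctraj p k l')))
      {(us, ls). \<forall>j<Suc k. us ! j \<noteq> ls ! j} = (if zU = zL then 0 else Pk p k u' l')" for u' l'
    unfolding map_pair[symmetric] measure_map_pmf pre Pk_def by simp
  show ?thesis
    unfolding Pk_def ctraj.simps pair_bind_bind measure_bind_pmf_int
    unfolding inner[unfolded Pk_def]
    by (cases "zU = zL") simp_all
qed

lemma cstep_supp:
  "z' \<in> set_pmf (cstep p (v, w)) \<Longrightarrow>
    fst z' + snd z' = v + w - 1 \<and> fst z' \<le> v \<and> v \<le> fst z' + 1"
  by (auto simp: cstep_def split: if_splits)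

lemma cstep_finite: "finite (set_pmf (cstep p z))"
  by (auto simp: cstep_def split: prod.splits)

lemma step_G:
  assumes pm: "\<forall>m\<ge>2. 0 \<le> pm m \<and> pm m \<le> 1"
    and pp: "\<forall>r s. 0 < r \<and> 0 < s \<longrightarrow> p r s = pm (r + s)"
    and v: "v \<le> Suc (Suc m)"
  shows "(\<integral>z'. GG pm (Suc m) (int (fst z')) \<partial>cstep p (v, Suc (Suc m) - v))
     = GG pm (Suc (Suc m)) (int v)"
proof -
  consider "v = 0" | "v = Suc (Suc m)" | "0 < v" "v < Suc (Suc m)" using v by linarith
  then show ?thesis
  proof cases
    case 1
    then show ?thesis by (simp add: cstep_def GG_nonpos del: GG.simps)
  next
    case 2
    then show ?thesis by (simp add: cstep_def GG_one del: GG.simps)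
  next
    case 3
    have pv: "p v (Suc (Suc m) - v) = pm (Suc (Suc m))" using pp 3 by auto
    have q0: "0 \<le> pm (Suc (Suc m))" "pm (Suc (Suc m)) \<le> 1" using pm by auto
    have iv: "int (v - 1) = int v - 1" using 3 by simp
    show ?thesis
      using 3 q0 by (simp add: cstep_def pv iv qq_def)
  qed
qed

lemma Pk_G:
  assumes pm: "\<forall>m\<ge>2. 0 \<le> pm m \<and> pm m \<le> 1"
    and pp: "\<forall>r s. 0 < r \<and> 0 < s \<longrightarrow> p r s = pm (r + s)"
  shows "u \<le> l \<Longrightarrow> l \<le> Suc m \<Longrightarrow>
    Pk p (Suc m) (u, Suc m - u) (l, Suc m - l) = GG pm (Suc m) (int l) - GG pm (Suc m) (int u)"
proof (induction m arbitrary: u l)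
  case 0
  then show ?case
    by (cases "u = l") (auto simp: Pk_Suc Pk_0' qq_def)
next
  case (Suc m)
  let ?zU = "(u, Suc (Suc m) - u)"
  let ?zL = "(l, Suc (Suc m) - l)"
  show ?case
  proof (cases "u = l")
    case True
    then show ?thesis by (simp add: Pk_Suc)
  next
    case False
    then have ul: "u < l" using Suc.prems by simp
    have inner: "(\<integral>l'. Pk p (Suc m) u' l' \<partial>cstep p ?zL)
        = GG pm (Suc (Suc m)) (int l) - GG pm (Suc m) (int (fst u'))"
      if u': "u' \<in> set_pmf (cstep p ?zU)" for u'
    proof -
      have su: "fst u' + snd u' = Suc m" "fst u' \<le> u" "u \<le> fst u' + 1"
        using cstep_supp[OF u'] Suc.prems by auto
      have "(\<integral>l'. Pk p (Suc m) u' l' \<partial>cstep p ?zL)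
          = (\<integral>l'. GG pm (Suc m) (int (fst l')) - GG pm (Suc m) (int (fst u')) \<partial>cstep p ?zL)"
      proof (rule integral_cong_AE)
        show "AE l' in measure_pmf (cstep p ?zL). Pk p (Suc m) u' l' =
            GG pm (Suc m) (int (fst l')) - GG pm (Suc m) (int (fst u'))"
          unfolding AE_measure_pmf_iff
        proof safe
          fix l' assume l': "l' \<in> set_pmf (cstep p ?zL)"
          have sl: "fst l' + snd l' = Suc m" "fst l' \<le> l" "l \<le> fst l' + 1"
            using cstep_supp[OF l'] Suc.prems by auto
          have eu: "u' = (fst u', Suc m - fst u')" using su by (cases u') auto
          have el: "l' = (fst l', Suc m - fst l')" using sl by (cases l') auto
          have "fst u' \<le> fst l'" "fst l' \<le> Suc m" using su sl ul by auto
          then show "Pk p (Suc m) u' l' =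
            GG pm (Suc m) (int (fst l')) - GG pm (Suc m) (int (fst u'))"
            using Suc.IH[of "fst u'" "fst l'"] eu el by metis
        qed
      qed auto
      also have "\<dots> = (\<integral>l'. GG pm (Suc m) (int (fst l')) \<partial>cstep p ?zL) - GG pm (Suc m) (int (fst u'))"
        by (subst Bochner_Integration.integral_diff)
           (auto intro!: integrable_measure_pmf_finite cstep_finite)
      also have "\<dots> = GG pm (Suc (Suc m)) (int l) - GG pm (Suc m) (int (fst u'))"
        using step_G[OF pm pp, of l m] Suc.prems by simp
      finally show ?thesis .
    qed
    have "Pk p (Suc (Suc m)) ?zU ?zL
        = (\<integral>u'. (\<integral>l'. Pk p (Suc m) u' l' \<partial>cstep p ?zL) \<partial>cstep p ?zU)"
      using ul by (subst Pk_Suc) simp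
    also have "\<dots> = (\<integral>u'. GG pm (Suc (Suc m)) (int l) - GG pm (Suc m) (int (fst u')) \<partial>cstep p ?zU)"
      by (rule integral_cong_AE) (auto simp: AE_measure_pmf_iff inner)
    also have "\<dots> = GG pm (Suc (Suc m)) (int l) - (\<integral>u'. GG pm (Suc m) (int (fst u')) \<partial>cstep p ?zU)"
      by (subst Bochner_Integration.integral_diff)
         (auto intro!: integrable_measure_pmf_finite cstep_finite)
    also have "\<dots> = GG pm (Suc (Suc m)) (int l) - GG pm (Suc (Suc m)) (int u)"
      using step_G[OF pm pp, of u m] Suc.prems by simp
    finally show ?thesis .
  qed
qed

lemma ctraj_supp:
  "us \<in> set_pmf (ctraj p k z) \<Longrightarrow>
    length us = Suc k \<and> (\<forall>i\<le>k. fst (us ! i) + snd (us ! i) = fst z + snd z - i)"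
proof (induction k arbitrary: us z)
  case 0
  then show ?case by simp
next
  case (Suc k)
  then obtain z' us' where z': "z' \<in> set_pmf (cstep p z)" and us': "us' \<in> set_pmf (ctraj p k z')"
    and us: "us = z # us'" by auto
  have lz: "fst z' + snd z' = fst z + snd z - 1"
    using cstep_supp[of z' p "fst z" "snd z"] z' by simp
  have IH: "length us' = Suc k \<and> (\<forall>i\<le>k. fst (us' ! i) + snd (us' ! i) = fst z' + snd z' - i)"
    using Suc.IH[OF us'] .
  show ?case
  proof (intro conjI allI impI)
    show "length us = Suc (Suc k)" using IH us by simp
  next
    fix i assume i: "i \<le> Suc k"
    show "fst (us ! i) + snd (us ! i) = fst z + snd z - i"
    proof (cases i)
      case 0
      then show ?thesis using us by simp
    next
      case (Suc i')
      then show ?thesis using us IH lz i by simp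
    qed
  qed
qed

lemma origin_level: "fst (w::nat\<times>nat) + snd w = 0 \<Longrightarrow> w = (0, 0)"
  by (cases w) auto

theorem theorem4:
  fixes a b x :: nat and pm :: "nat \<Rightarrow> real" and p :: "nat \<Rightarrow> nat \<Rightarrow> real"
  assumes "\<forall>m\<ge>2. 0 \<le> pm m \<and> pm m \<le> 1"
    and "\<forall>r s. 0 < r \<and> 0 < s \<longrightarrow> p r s = pm (r + s)"
  shows "B p a b x =
    measure_pmf.prob (uend pm (a + b + x) (int a, int (b + x + 1)))
      {(- int t, 1 + int t) | t. t \<le> x}"
proof -
  define n where "n = a + b + x + 1"
  let ?M = "pair_pmf (ctraj p n (a, b + x + 1)) (ctraj p n (a + x + 1, b))"
  let ?E1 = "{(us, ls). \<exists>i\<le>n. us ! i = ls ! i \<and> (\<forall>j<i. us ! j \<noteq> ls ! j) \<and> us ! i = (0::nat, 0::nat)}"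
  let ?E2 = "{(us, ls). \<forall>j<n. us ! j \<noteq> (ls ! j :: nat \<times> nat)}"
  have eqE: "?E1 \<inter> set_pmf ?M = ?E2 \<inter> set_pmf ?M"
  proof (intro equalityI subsetI)
    fix w assume w: "w \<in> ?E1 \<inter> set_pmf ?M"
    obtain us ls where wl: "w = (us, ls)" by fastforce
    have us: "us \<in> set_pmf (ctraj p n (a, b + x + 1))" using w wl by auto
    obtain i where i: "i \<le> n" "us ! i = ls ! i" "\<forall>j<i. us ! j \<noteq> ls ! j" "us ! i = (0, 0)"
      using w wl by auto
    have "fst (us ! i) + snd (us ! i) = n - i" using ctraj_supp[OF us] i(1) n_def by simp
    then have "i = n" using i(1,4) by simp
    then show "w \<in> ?E2 \<inter> set_pmf ?M" using w wl i by auto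
  next
    fix w assume w: "w \<in> ?E2 \<inter> set_pmf ?M"
    obtain us ls where wl: "w = (us, ls)" by fastforce
    have us: "us \<in> set_pmf (ctraj p n (a, b + x + 1))" using w wl by auto
    have ls: "ls \<in> set_pmf (ctraj p n (a + x + 1, b))" using w wl by auto
    have "us ! n = (0, 0)"
      by (rule origin_level) (use ctraj_supp[OF us] n_def in simp)
    moreover have "ls ! n = (0, 0)"
      by (rule origin_level) (use ctraj_supp[OF ls] n_def in simp)
    ultimately show "w \<in> ?E1 \<inter> set_pmf ?M" using w wl by auto
  qed
  have "B p a b x = measure_pmf.prob ?M ?E1"
    unfolding B_def Let_def n_def by simp
  also have "\<dots> = measure_pmf.prob ?M (?E1 \<inter> set_pmf ?M)"
    by (rule measure_Int_set_pmf[symmetric])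
  also have "\<dots> = measure_pmf.prob ?M (?E2 \<inter> set_pmf ?M)"
    by (simp only: eqE)
  also have "\<dots> = measure_pmf.prob ?M ?E2"
    by (rule measure_Int_set_pmf)
  also have "\<dots> = Pk p n (a, b + x + 1) (a + x + 1, b)"
    by (simp add: Pk_def)
  also have "\<dots> = GG pm n (int (a + x + 1)) - GG pm n (int a)"
    using Pk_G[OF assms, of a "a + x + 1" "a + b + x"] unfolding n_def
    by (simp add: add.commute add.left_commute)
  also have "\<dots> = measure_pmf.prob (uend pm (a + b + x) (int a, int (b + x + 1)))
      {(- int t, 1 + int t) | t. t \<le> x}"
    using rhs_val[OF assms(1), of a b x] unfolding n_def by simp
  finally show ?thesis .
qed

end
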